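(* Let $f$ be a Moufang permutation on an abelian group $(X,+)$ with associated biadditive mapping $\beta$. Then for every integer $i$ and all $x,y\in X$, $$f^{-i}\big(f^i(x)+f^i(y)\big)=x+y+\sum_{k\in I(0,i)}f^{-3k}(\beta(x,y)).$$
   Context: A permutation $f$ of an abelian group $(X,+)$ is a Moufang permutation if the map $\beta(x,y)=f^{-1}(f(x)+f(y))-x-y$ (P1) is symmetric, alternating ($\beta(x,x)=0$) and biadditive, and for all $x,y,z\in X$: (P2) $\beta(\beta(x,y),z)=0$ and (P3) $\beta(f(x),f(y))=f(\beta(f^3(x),y))$; $\beta$ is the associated biadditive mapping. For integers $i,j$, $I(i,j)$ is $\emptyset$ if $i=j$, $\{i,\dots,j-1\}$ if $i<j$, $\{j,\dots,i-1\}$ if $j<i$. *)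

theory Defs
  imports Main
begin

definition fpow :: "('a \<Rightarrow> 'a) \<Rightarrow> int \<Rightarrow> 'a \<Rightarrow> 'a" where
  "fpow f i = (if 0 \<le> i then f ^^ nat i else (inv f) ^^ nat (- i))"

definition Iset :: "int \<Rightarrow> int \<Rightarrow> int set" where
  "Iset i j = (if i = j then {} else if i < j then {i..j-1} else {j..i-1})"

definition mbeta :: "('a::ab_group_add \<Rightarrow> 'a) \<Rightarrow> 'a \<Rightarrow> 'a \<Rightarrow> 'a" where
  "mbeta f x y = inv f (f x + f y) - x - y"

definition moufang_perm :: "('a::ab_group_add \<Rightarrow> 'a) \<Rightarrow> bool" where
  "moufang_perm f \<longleftrightarrow> bij f
     \<and> (\<forall>x y. mbeta f x y = mbeta f y x)
     \<and> (\<forall>x. mbeta f x x = 0)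
     \<and> (\<forall>x y z. mbeta f (x + y) z = mbeta f x z + mbeta f y z)
     \<and> (\<forall>x y z. mbeta f x (y + z) = mbeta f x y + mbeta f x z)
     \<and> (\<forall>x y z. mbeta f (mbeta f x y) z = 0)
     \<and> (\<forall>x y. mbeta f (f x) (f y) = f (mbeta f ((f ^^ 3) x) y))"

end

theory Submission
  imports Defs
begin

lemma fpow0[simp]: "fpow f 0 x = x" by (simp add: fpow_def)

lemma fpow_succ:
  assumes "bij f" shows "fpow f (i+1) x = f (fpow f i x)"
proof (cases "0 \<le> i")
  case True
  then have "nat (i+1) = Suc (nat i)" by simp
  then show ?thesis using True by (simp add: fpow_def)
next
  case False
  show ?thesis
  proof (cases "i = -1")
    case True
    then show ?thesis using assms by (simp add: fpow_def bij_is_surj surj_f_inv_f)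
  next
    case F2: False
    then have "nat (-i) = Suc (nat (-(i+1)))" using False by simp
    then show ?thesis using False F2 assms by (simp add: fpow_def bij_is_surj surj_f_inv_f)
  qed
qed

lemma fpow_pred:
  assumes "bij f" shows "fpow f (i-1) x = inv f (fpow f i x)"
proof -
  have "fpow f i x = f (fpow f (i-1) x)" using fpow_succ[OF assms, of "i-1"] by simp
  then show ?thesis using assms by (simp add: bij_is_inj inv_f_f)
qed

lemma fpow_add:
  assumes "bij f" shows "fpow f (i+j) x = fpow f i (fpow f j x)"
proof (induction i rule: int_induct[where k=0])
  case base then show ?case by simp
next
  case (step1 i)
  have "fpow f (i+1+j) x = fpow f ((i+j)+1) x" by (simp add: algebra_simps)
  also have "\<dots> = f (fpow f (i+j) x)" by (rule fpow_succ[OF assms])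
  finally show ?case using step1 fpow_succ[OF assms] by simp
next
  case (step2 i)
  have "fpow f (i-1+j) x = fpow f ((i+j)-1) x" by (simp add: algebra_simps)
  also have "\<dots> = inv f (fpow f (i+j) x)" by (rule fpow_pred[OF assms])
  finally show ?case using step2 fpow_pred[OF assms] by simp
qed

lemma fpow_inv1: "bij f \<Longrightarrow> fpow f i (fpow f (-i) z) = z"
  using fpow_add[of f i "-i" z] by simp
lemma fpow_inv2: "bij f \<Longrightarrow> fpow f (-i) (fpow f i z) = z"
  using fpow_add[of f "-i" i z] by simp

context
  fixes f :: "'a::ab_group_add \<Rightarrow> 'a"
  assumes M: "moufang_perm f"
begin

abbreviation "B \<equiv> mbeta f"

lemma bijf: "bij f" using M by (simp add: moufang_perm_def)
lemma fi[simp]: "f (inv f z) = z" using bijf by (simp add: bij_is_surj surj_f_inv_f)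
lemma if_[simp]: "inv f (f z) = z" using bijf by (simp add: bij_is_inj inv_f_f)
lemma symB: "B a b = B b a" using M unfolding moufang_perm_def by blast
lemma P2: "B (B a b) c = 0" using M unfolding moufang_perm_def by blast
lemma P3: "B (f a) (f b) = f (B (f (f (f a))) b)"
proof -
  have "(f ^^ 3) a = f (f (f a))" by (simp add: numeral_3_eq_3)
  then show ?thesis using M unfolding moufang_perm_def by metis
qed

lemma one: "B (f u) w = f (B u (f (f w)))"
proof -
  have "B (f u) w = B (f (inv f w)) (f u)" using symB by simp
  also have "\<dots> = f (B (f (f w)) u)" using P3[of "inv f w" u] by simp
  finally show ?thesis using symB[of "f (f w)" u] by simp
qed

lemma L1: "B (f (f (f a))) w = inv f (inv f (inv f (B a w)))"
proof -
  have "B (f u) w = f (f (f (B w (f (f (f (f u)))))))" for u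
  proof -
    have "B (f u) w = f (B (f (f w)) u)" using one[of u w] symB[of "f (f w)" u] by simp
    also have "B (f (f w)) u = f (B (f w) (f (f u)))" by (rule one)
    also have "B (f w) (f (f u)) = f (B w (f (f (f (f u)))))" by (rule one)
    finally show ?thesis .
  qed
  from this[of "inv f a"] have "B a w = f (f (f (B w (f (f (f a))))))" by simp
  then have "B a w = f (f (f (B (f (f (f a))) w)))" using symB[of w "f (f (f a))"] by simp
  then show ?thesis by simp
qed

lemma Q1: "B (f a) (f b) = inv f (inv f (B a b))"
  by (simp add: P3 L1)

lemma Li: "B (fpow f (3*i) a) w = fpow f (-3*i) (B a w)"
proof (induction i rule: int_induct[where k=0])
  case base then show ?case by simp
next
  case (step1 i)
  have "fpow f (3*(i+1)) a = f (f (f (fpow f (3*i) a)))"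
  proof -
    have h: "3*(i+1) = 3*i + 1 + 1 + 1" by simp
    show ?thesis by (simp only: h fpow_succ[OF bijf])
  qed
  moreover have "fpow f (-3*(i+1)) z = inv f (inv f (inv f (fpow f (-3*i) z)))" for z
  proof -
    have h: "-3*(i+1) = -3*i - 1 - 1 - 1" by simp
    show ?thesis by (simp only: h fpow_pred[OF bijf])
  qed
  ultimately show ?case using step1 by (simp add: L1)
next
  case (step2 i)
  define a' where "a' = fpow f (3*(i-1)) a"
  have e: "fpow f (3*i) a = f (f (f a'))"
  proof -
    have h: "3*i = 3*(i-1) + 1 + 1 + 1" by simp
    show ?thesis unfolding a'_def by (simp only: h fpow_succ[OF bijf])
  qed
  have "fpow f (-3*(i-1)) z = f (f (f (fpow f (-3*i) z)))" for z
  proof -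
    have h: "-3*(i-1) = -3*i + 1 + 1 + 1" by simp
    show ?thesis by (simp only: h fpow_succ[OF bijf])
  qed
  moreover have "inv f (inv f (inv f (B a' w))) = fpow f (-3*i) (B a w)"
    using step2 e by (simp add: L1)
  then have "B a' w = f (f (f (fpow f (-3*i) (B a w))))"
    by (metis fi)
  ultimately show ?case unfolding a'_def by simp
qed

lemma Qi: "B (fpow f i a) (fpow f i b) = fpow f (-2*i) (B a b)"
proof (induction i rule: int_induct[where k=0])
  case base then show ?case by simp
next
  case (step1 i)
  have "fpow f (-2*(i+1)) z = inv f (inv f (fpow f (-2*i) z))" for z
  proof -
    have h: "-2*(i+1) = -2*i - 1 - 1" by simp
    show ?thesis by (simp only: h fpow_pred[OF bijf])
  qed
  then show ?case using step1 by (simp add: fpow_succ[OF bijf] Q1)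
next
  case (step2 i)
  have "fpow f (-2*(i-1)) z = f (f (fpow f (-2*i) z))" for z
  proof -
    have h: "-2*(i-1) = -2*i + 1 + 1" by simp
    show ?thesis by (simp only: h fpow_succ[OF bijf])
  qed
  moreover have "fpow f i a = f (fpow f (i-1) a)" "fpow f i b = f (fpow f (i-1) b)"
    using fpow_succ[OF bijf, of "i-1"] by simp_all
  then have "inv f (inv f (B (fpow f (i-1) a) (fpow f (i-1) b))) = fpow f (-2*i) (B a b)"
    using step2 by (simp add: Q1)
  then have "B (fpow f (i-1) a) (fpow f (i-1) b) = f (f (fpow f (-2*i) (B a b)))"
    by (metis fi)
  ultimately show ?case by simp
qed

definition "Im b \<longleftrightarrow> (\<exists>u v. b = B u v)"

lemma add_f: "Im b \<Longrightarrow> f (z + b) = f z + f b"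
proof -
  assume "Im b"
  then obtain u v where b: "b = B u v" by (auto simp: Im_def)
  have "B z b = 0" using b symB[of z "B u v"] P2[of u v z] by simp
  then have "inv f (f z + f b) = z + b" by (simp add: mbeta_def algebra_simps)
  then show ?thesis by (metis fi)
qed

lemma Im_f: "Im b \<Longrightarrow> Im (f b)"
proof -
  assume "Im b"
  then obtain u v where b: "b = B u v" by (auto simp: Im_def)
  have "f (f (f (inv f (inv f (inv f u))))) = u" by simp
  then have "f b = B (f (inv f (inv f (inv f u)))) (f v)" using b by (metis P3)
  then show ?thesis by (auto simp: Im_def)
qed

lemma Im_inv: "Im b \<Longrightarrow> Im (inv f b)"
proof -
  assume "Im b"
  then obtain u v where b: "b = B u v" by (auto simp: Im_def)
  have "b = B (f (inv f u)) (f (inv f v))" using b by simp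
  also have "\<dots> = f (B (f (f u)) (inv f v))" using P3[of "inv f u" "inv f v"] by simp
  finally have "inv f b = B (f (f u)) (inv f v)" by simp
  then show ?thesis by (auto simp: Im_def)
qed

lemma add_inv: "Im b \<Longrightarrow> inv f (z + b) = inv f z + inv f b"
proof -
  assume "Im b"
  then have "f (inv f z + inv f b) = z + b" by (simp add: add_f Im_inv)
  then show ?thesis by (metis if_)
qed

lemma Im_fpow: "Im b \<Longrightarrow> Im (fpow f i b) \<and> (\<forall>z. fpow f i (z + b) = fpow f i z + fpow f i b)"
proof (induction i rule: int_induct[where k=0])
  case base then show ?case by simp
next
  case (step1 i)
  then show ?case by (simp add: fpow_succ[OF bijf] Im_f add_f)
next
  case (step2 i)
  then show ?case by (simp add: fpow_pred[OF bijf] Im_inv add_inv)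
qed

lemma twoB: "B a b + B a b = 0"
proof -
  have a: "\<forall>x y z. B (x + y) z = B x z + B y z" "\<forall>x y z. B x (y + z) = B x y + B x z"
    "\<forall>x. B x x = 0" using M unfolding moufang_perm_def by blast+
  have "0 = B (a+b) (a+b)" using a by simp
  also have "\<dots> = B a (a+b) + B b (a+b)" using a(1) by blast
  also have "\<dots> = B a a + B a b + (B b a + B b b)" using a(2) by metis
  finally have "B a b + B b a = 0" using a by simp
  then show ?thesis using symB[of b a] by simp
qed

lemma Im_two: "Im b \<Longrightarrow> b + b = 0" by (auto simp: Im_def twoB)

lemma tt: "fpow f j (B x y) + fpow f j (B x y) = 0"
proof -
  have "Im (B x y)" by (auto simp: Im_def)
  then show ?thesis using Im_fpow Im_two by blast
qed

lemma Gstep: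
  "fpow f (-(i+1)) (fpow f (i+1) x + fpow f (i+1) y)
   = fpow f (-i) (fpow f i x + fpow f i y) + fpow f (-3*i) (B x y)"
proof -
  define a where "a = fpow f i x"
  define b where "b = fpow f i y"
  define G where "G = fpow f (-i) (a + b)"
  define w where "w = fpow f (-3*i) (B x y)"
  have "Im (B x y)" by (auto simp: Im_def)
  then have Imw: "Im w" unfolding w_def using Im_fpow by blast
  have m1: "fpow f (-(i+1)) z = fpow f (-i) (inv f z)" for z
  proof -
    have "fpow f (-(i+1)) z = fpow f (-i + -1) z" by simp
    also have "\<dots> = fpow f (-i) (fpow f (-1) z)" by (rule fpow_add[OF bijf])
    finally show ?thesis by (simp add: fpow_def)
  qed
  have "inv f (f a + f b) = a + b + B a b" by (simp add: mbeta_def)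
  moreover have "B a b = fpow f i w"
    unfolding a_def b_def w_def Qi using fpow_add[OF bijf, of i "-3*i"] by simp
  moreover have "a + b = fpow f i G" unfolding G_def by (simp add: fpow_inv1[OF bijf])
  ultimately have "inv f (f a + f b) = fpow f i (G + w)" using Im_fpow[OF Imw] by simp
  then have "fpow f (-i) (inv f (f a + f b)) = G + w"
    by (simp add: fpow_inv2[OF bijf])
  moreover have "fpow f (i+1) x = f a" "fpow f (i+1) y = f b"
    unfolding a_def b_def by (simp_all only: fpow_succ[OF bijf])
  ultimately have "fpow f (-(i+1)) (fpow f (i+1) x + fpow f (i+1) y) = G + w"
    by (simp only: m1)
  then show ?thesis unfolding G_def w_def a_def b_def .
qed

end

lemma Sstep:
  fixes t :: "int \<Rightarrow> 'a::ab_group_add"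
  assumes "t i + t i = 0"
  shows "(\<Sum>k\<in>Iset 0 (i+1). t k) = (\<Sum>k\<in>Iset 0 i. t k) + t i"
proof (cases "0 \<le> i")
  case True
  then have "Iset 0 (i+1) = insert i (Iset 0 i)" "i \<notin> Iset 0 i" "finite (Iset 0 i)"
    by (auto simp: Iset_def)
  then show ?thesis by (simp add: add.commute)
next
  case False
  then have "Iset 0 i = insert i (Iset 0 (i+1))" "i \<notin> Iset 0 (i+1)" "finite (Iset 0 (i+1))"
    by (auto simp: Iset_def)
  then show ?thesis using assms by (simp add: eq_neg_iff_add_eq_0 add.assoc)
qed

theorem mainTheorem12:
  fixes f :: "'a::ab_group_add \<Rightarrow> 'a" and i :: int and x y :: 'a
  assumes "moufang_perm f"
  shows "fpow f (- i) (fpow f i x + fpow f i y)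
         = x + y + (\<Sum>k\<in>Iset 0 i. fpow f (- 3 * k) (mbeta f x y))"
proof (induction i rule: int_induct[where k=0])
  case base then show ?case by (simp add: Iset_def)
next
  case (step1 i)
  then show ?case using Gstep[OF assms, of i x y] Sstep[of "\<lambda>k. fpow f (- 3 * k) (mbeta f x y)" i] tt[OF assms]
    by (simp add: algebra_simps)
next
  case (step2 i)
  then show ?case using Gstep[OF assms, of "i-1" x y] Sstep[of "\<lambda>k. fpow f (- 3 * k) (mbeta f x y)" "i-1"] tt[OF assms]
    by (simp add: algebra_simps)
qed

end
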